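(* Let $w\in P_4$ be one of the monomials $x_1x_2^{6}x_3^{6}x_4$, $x_1x_2^{2}x_3^{6}x_4^{5}$, $x_1x_2^{6}x_3^{2}x_4^{5}$, $x_1x_2^{6}x_3^{3}x_4^{4}$, $x_1^{3}x_2^{4}x_3x_4^{6}$, $x_1^{3}x_2^{4}x_3^{5}x_4^{2}$, $x_1^{3}x_2^{5}x_3^{4}x_4^{2}$, $x_1^{3}x_2^{4}x_3^{3}x_4^{4}$, $x_1^{3}x_2^{4}x_3^{4}x_4^{3}$. Then for every $1\le i\le5$ the monomial $x_i^7f_i(w)\in P_5$ is strictly inadmissible.
   Context: $P_k=\mathbb F_2[x_1,\dots,x_k]$, $\deg x_i=1$, modules over the mod-2 Steenrod algebra $\mathcal A$. For $1\le i\le5$, $f_i:P_4\to P_5$ is the algebra homomorphism with $f_i(x_u)=x_u$ for $u<i$ and $f_i(x_u)=x_{u+1}$ for $i\le u\le4$. $\mathcal A(s-1)$ is the sub-Hopf algebra generated by $Sq^r$, $0\le r<2^s$, with augmentation ideal $\mathcal A(s-1)^+$. For $x=x_1^{a_1}\cdots x_5^{a_5}$: weight vector $\omega_i(x)=\sum_j\alpha_{i-1}(a_j)$ ($\alpha_r(a)$ the $r$-th binary digit), exponent vector $\sigma(x)=(a_1,\dots,a_5)$, both ordered left-lexicographically; for monomials of equal degree, $x<y$ iff $\omega(x)<\omega(y)$, or $\omega(x)=\omega(y)$ and $\sigma(x)<\sigma(y)$. $P_5^-(\omega)$ is spanned by monomials $y$ of degree $\sum_i2^{i-1}\omega_i$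 with $\omega(y)<\omega$. A monomial $x$ is strictly inadmissible if there are monomials $y_1,\dots,y_r<x$ with $x+\sum_jy_j\in\mathcal A(s-1)^+P_5+P_5^-(\omega(x))$, where $s=\max\{i:\omega_i(x)>0\}$. *)

theory Defs
  imports Main
begin

text \<open>Monomials of P_k: exponent lists (a_1,...,a_k) of length k.
 Polynomials over F_2: finite sets of monomials (the set of monomials with coefficient 1);
 addition is symmetric difference.\<close>

type_synonym mono = "nat list"
type_synonym poly = "nat list set"

definition sdiff :: "'a set \<Rightarrow> 'a set \<Rightarrow> 'a set" where
  "sdiff p q = (p - q) \<union> (q - p)"

definition is_poly :: "nat \<Rightarrow> poly \<Rightarrow> bool" where
  "is_poly k P \<longleftrightarrow> finite P \<and> (\<forall>a\<in>P. length a = k)"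

definition deg :: "mono \<Rightarrow> nat" where
  "deg a = sum_list a"

text \<open>Sq^r on a monomial (Cartan formula with Sq^t(x^a) = binom a t x^(a+t)):
  the coefficient of x^b is prod_j binom(a_j, b_j - a_j) mod 2.\<close>
definition sq_mono :: "nat \<Rightarrow> mono \<Rightarrow> poly" where
  "sq_mono r a = {b. length b = length a \<and> (\<forall>j<length a. a ! j \<le> b ! j)
       \<and> sum_list b = sum_list a + r
       \<and> odd (\<Prod>j<length a. (a ! j) choose (b ! j - a ! j))}"

text \<open>Sq^r on a polynomial, extended F_2-linearly.\<close>
definition sq_poly :: "nat \<Rightarrow> poly \<Rightarrow> poly" where
  "sq_poly r P = {b. odd (card {a\<in>P. b \<in> sq_mono r a})}"

inductive_set f2span :: "poly set \<Rightarrow> poly set" for S where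
  zero: "{} \<in> f2span S"
| add: "p \<in> f2span S \<Longrightarrow> q \<in> S \<Longrightarrow> sdiff p q \<in> f2span S"

text \<open>A(s-1)^+ P_5: the span of all Sq^r f with 0 < r < 2^s and f in P_5.\<close>
definition hit5 :: "nat \<Rightarrow> poly set" where
  "hit5 s = f2span {sq_poly r f | r f. 0 < r \<and> r < 2 ^ s \<and> is_poly 5 f}"

text \<open>Weight vector, 0-indexed: omega a i = omega_(i+1)(x) = sum_j alpha_i(a_j).\<close>
definition omega :: "mono \<Rightarrow> nat \<Rightarrow> nat" where
  "omega a i = (\<Sum>j<length a. (a ! j div 2 ^ i) mod 2)"

definition lexless :: "(nat \<Rightarrow> nat) \<Rightarrow> (nat \<Rightarrow> nat) \<Rightarrow> bool" where
  "lexless f g \<longleftrightarrow> (\<exists>k. (\<forall>i<k. f i = g i) \<and> f k < g k)"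

definition lexless_list :: "nat list \<Rightarrow> nat list \<Rightarrow> bool" where
  "lexless_list a b \<longleftrightarrow> (\<exists>k<length a. k < length b \<and> (\<forall>i<k. a ! i = b ! i) \<and> a ! k < b ! k)"

definition mless :: "mono \<Rightarrow> mono \<Rightarrow> bool" where
  "mless x y \<longleftrightarrow> length x = 5 \<and> length y = 5 \<and> deg x = deg y \<and>
     (lexless (omega x) (omega y) \<or> (omega x = omega y \<and> lexless_list x y))"

text \<open>Degree of a weight vector: sum_i 2^(i-1) omega_i (0-indexed here).\<close>
definition wdeg :: "(nat \<Rightarrow> nat) \<Rightarrow> nat" where
  "wdeg w = (\<Sum>i\<in>{i. w i \<noteq> 0}. 2 ^ i * w i)"

definition P5minus :: "(nat \<Rightarrow> nat) \<Rightarrow> poly set" where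
  "P5minus w = {P. is_poly 5 P \<and> (\<forall>y\<in>P. deg y = wdeg w \<and> lexless (omega y) w)}"

text \<open>s = max{i : omega_i(x) > 0} (1-indexed) is Max{i : omega x i > 0} + 1 (0-indexed).\<close>
definition sval :: "mono \<Rightarrow> nat" where
  "sval x = Max {i. omega x i > 0} + 1"

definition strictly_inadmissible :: "mono \<Rightarrow> bool" where
  "strictly_inadmissible x \<longleftrightarrow>
     (\<exists>Y. finite Y \<and> (\<forall>y\<in>Y. mless y x) \<and>
        (\<exists>h\<in>hit5 (sval x). \<exists>m\<in>P5minus (omega x). sdiff {x} Y = sdiff h m))"

definition f_mono :: "nat \<Rightarrow> mono \<Rightarrow> mono" where
  "f_mono i a = take (i - 1) a @ 0 # drop (i - 1) a"

definition mmul :: "mono \<Rightarrow> mono \<Rightarrow> mono" where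
  "mmul a b = map2 (+) a b"

definition xpow :: "nat \<Rightarrow> nat \<Rightarrow> mono" where
  "xpow i e = (replicate 5 0)[i - 1 := e]"

end

theory Submission
  imports Defs
begin


fun cands :: "nat \<Rightarrow> nat list \<Rightarrow> nat list list" where
  "cands r [] = [[]]"
| "cands r (x#xs) = concat (map (\<lambda>t. map (\<lambda>l. (x+t)#l) (cands r xs)) [0..<Suc r])"

lemma cands_set: "b \<in> set (cands r a) \<longleftrightarrow> length b = length a \<and> (\<forall>j<length a. a!j \<le> b!j \<and> b!j \<le> a!j + r)"
proof (induction a arbitrary: b)
  case Nil then show ?case by auto
next
  case (Cons x xs)
  show ?case
  proof (cases b)
    case Nil then show ?thesis by auto
  next
    case (Cons y ys)
    have "b \<in> set (cands r (x#xs)) \<longleftrightarrow> x \<le> y \<and> y \<le> x + r \<and> ys \<in> set (cands r xs)"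
    proof
      assume "b \<in> set (cands r (x#xs))"
      then show "x \<le> y \<and> y \<le> x + r \<and> ys \<in> set (cands r xs)" using Cons by auto
    next
      assume h: "x \<le> y \<and> y \<le> x + r \<and> ys \<in> set (cands r xs)"
      then have "y - x \<in> set [0..<Suc r]" and "b = (x + (y - x)) # ys" using Cons by auto
      then show "b \<in> set (cands r (x#xs))" using h by (auto intro!: bexI[where x="y-x"] simp del: upt_Suc)
    qed
    also have "\<dots> \<longleftrightarrow> length b = length (x#xs) \<and> (\<forall>j<length (x#xs). (x#xs)!j \<le> b!j \<and> b!j \<le> (x#xs)!j + r)" using Cons.IH[of ys] Cons
      by (simp add: All_less_Suc2) blast
    finally show ?thesis by simp
  qed
qed

lemma diff_le_sum: "length (a::nat list) = length b \<Longrightarrow> \<forall>j<length a. a!j \<le> b!j \<Longrightarrow> j < length a \<Longrightarrow>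
   b!j - a!j \<le> sum_list b - sum_list a \<and> sum_list a \<le> sum_list b"
proof (induction a b arbitrary: j rule: list_induct2)
  case Nil then show ?case by simp
next
  case (Cons x xs y ys)
  have h: "\<forall>j<length xs. xs!j \<le> ys!j" using Cons.prems(1) by auto
  have xy: "x \<le> y" using Cons.prems(1) by force
  have s: "sum_list xs \<le> sum_list ys"
  proof (cases xs)
    case Nil then show ?thesis using Cons.hyps by auto
  next
    case (Cons _ _) then show ?thesis using Cons.IH[OF h, of 0] by simp
  qed
  show ?case
  proof (cases j)
    case 0 then show ?thesis using xy s by simp
  next
    case (Suc k) then show ?thesis using Cons.IH[OF h, of k] Cons.prems xy by simp linarith
  qed
qed

lemma prod_map2: "length a = length b \<Longrightarrow> (\<Prod>j<length a. f (a!j) (b!j)) = prod_list (map2 f a b)"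
proof (induction a b rule: list_induct2)
  case Nil then show ?case by simp
next
  case (Cons x xs y ys)
  have "(\<Prod>j<length (x#xs). f ((x#xs)!j) ((y#ys)!j)) = f x y * (\<Prod>j<length xs. f (xs!j) (ys!j))"
    by (simp only: length_Cons prod.lessThan_Suc_shift) simp
  then show ?case using Cons by simp
qed

definition sqm :: "nat \<Rightarrow> nat list \<Rightarrow> nat list list" where
  "sqm r a = filter (\<lambda>b. sum_list b = sum_list a + r \<and> odd (prod_list (map2 (\<lambda>x y. x choose (y - x)) a b))) (cands r a)"

lemma sqm_set: "set (sqm r a) = sq_mono r a"
proof (intro set_eqI iffI)
  fix b assume "b \<in> set (sqm r a)"
  then show "b \<in> sq_mono r a" unfolding sqm_def sq_mono_def
    by (auto simp: cands_set prod_map2[symmetric])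
next
  fix b assume b: "b \<in> sq_mono r a"
  then have l: "length b = length a" and le: "\<forall>j<length a. a!j \<le> b!j" and s: "sum_list b = sum_list a + r"
    and o: "odd (\<Prod>j<length a. a ! j choose (b ! j - a ! j))"
    unfolding sq_mono_def by auto
  have "\<forall>j<length a. b!j \<le> a!j + r"
    using diff_le_sum[OF l[symmetric] le] s by fastforce
  then show "b \<in> set (sqm r a)" unfolding sqm_def using l le s o prod_map2[OF l[symmetric], of "\<lambda>x y. x choose (y - x)"] by (auto simp: cands_set)
qed

definition xorl :: "'a list \<Rightarrow> 'a list \<Rightarrow> 'a list" where
  "xorl P Q = filter (\<lambda>b. b \<notin> set Q) P @ filter (\<lambda>b. b \<notin> set P) Q"

lemma xorl_set: "set (xorl P Q) = sdiff (set P) (set Q)"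
  unfolding xorl_def sdiff_def by auto

fun polyl :: "nat \<Rightarrow> nat list list \<Rightarrow> nat list list" where
  "polyl r [] = []"
| "polyl r (a#L) = xorl (sqm r a) (polyl r L)"

lemma sq_poly_empty: "sq_poly r {} = {}"
  unfolding sq_poly_def by simp

lemma sq_poly_insert: "finite F \<Longrightarrow> a \<notin> F \<Longrightarrow> sq_poly r (insert a F) = sdiff (sq_mono r a) (sq_poly r F)"
proof (intro set_eqI)
  fix b assume f: "finite F" and a: "a \<notin> F"
  have "{a'\<in>insert a F. b \<in> sq_mono r a'} = (if b \<in> sq_mono r a then insert a {a'\<in>F. b \<in> sq_mono r a'} else {a'\<in>F. b \<in> sq_mono r a'})"
    by auto
  moreover have "finite {a'\<in>F. b \<in> sq_mono r a'}" using f by simp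
  moreover have "a \<notin> {a'\<in>F. b \<in> sq_mono r a'}" using a by simp
  ultimately have "card {a'\<in>insert a F. b \<in> sq_mono r a'} = (if b \<in> sq_mono r a then Suc (card {a'\<in>F. b \<in> sq_mono r a'}) else card {a'\<in>F. b \<in> sq_mono r a'})"
    by (metis (no_types, lifting) card_insert_disjoint)
  then show "b \<in> sq_poly r (insert a F) \<longleftrightarrow> b \<in> sdiff (sq_mono r a) (sq_poly r F)"
    unfolding sq_poly_def sdiff_def by auto
qed

lemma polyl_set: "distinct L \<Longrightarrow> set (polyl r L) = sq_poly r (set L)"
  by (induction L) (auto simp: sq_poly_empty sq_poly_insert xorl_set sqm_set)

fun lexl :: "nat list \<Rightarrow> nat list \<Rightarrow> bool" where
  "lexl (x#xs) (y#ys) = (x < y \<or> (x = y \<and> lexl xs ys))"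
| "lexl _ _ = False"

lemma lexl_list: "lexl a b \<Longrightarrow> lexless_list a b"
proof (induction a b rule: lexl.induct)
  case (1 x xs y ys)
  show ?case
  proof (cases "x < y")
    case True then show ?thesis unfolding lexless_list_def by (intro exI[of _ 0]) auto
  next
    case False
    then have "x = y" "lexl xs ys" using 1(2) by auto
    then obtain k where "k<length xs" "k < length ys" "\<forall>i<k. xs!i = ys!i" "xs!k < ys!k"
      using 1(1) False unfolding lexless_list_def by auto
    then show ?thesis unfolding lexless_list_def using \<open>x = y\<close>
      by (intro exI[of _ "Suc k"]) (auto simp: less_Suc_eq_0_disj)
  qed
qed auto

lemma lexl_fun: "lexl (map f [0..<n]) (map g [0..<n]) \<Longrightarrow> lexless f g"
proof -
  assume "lexl (map f [0..<n]) (map g [0..<n])"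
  then obtain k where "k < n" "\<forall>i<k. f i = g i" "f k < g k"
    using lexl_list unfolding lexless_list_def by fastforce
  then show ?thesis unfolding lexless_def by auto
qed

definition omega_ex :: "nat list \<Rightarrow> nat \<Rightarrow> nat" where
  "omega_ex a i = sum_list (map (\<lambda>v. v div 2 ^ i mod 2) a)"

lemma omega_ex: "omega a i = omega_ex a i"
  unfolding omega_def omega_ex_def by (simp add: sum_list_sum_nth atLeast0LessThan)

lemma omega_zero: "list_all (\<lambda>v. v < 32) a \<Longrightarrow> 5 \<le> i \<Longrightarrow> omega a i = 0"
proof -
  assume a: "list_all (\<lambda>v. v < 32) a" and i: "5 \<le> i"
  have "(32::nat) \<le> 2 ^ i" using power_increasing[OF i, of "2::nat"] by simp
  then have "\<forall>v\<in>set a. v div 2 ^ i = 0" using a by (auto simp: list_all_iff)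
  then show ?thesis unfolding omega_def by (simp add: nth_mem)
qed

definition om :: "nat list \<Rightarrow> nat list" where
  "om a = map (omega_ex a) [0..<5]"

definition mless_ex :: "nat list \<Rightarrow> nat list \<Rightarrow> bool" where
  "mless_ex y x \<longleftrightarrow> length y = 5 \<and> length x = 5 \<and> sum_list y = sum_list x \<and>
     list_all (\<lambda>v. v < 32) y \<and> list_all (\<lambda>v. v < 32) x \<and>
     (lexl (om y) (om x) \<or> (om y = om x \<and> lexl y x))"

lemma mless_ex: "mless_ex y x \<Longrightarrow> mless y x"
proof -
  assume m: "mless_ex y x"
  have e: "om a = map (omega a) [0..<5]" for a unfolding om_def by (simp add: omega_ex)
  have eq: "omega y = omega x" if "om y = om x"
  proof
    fix i show "omega y i = omega x i"
    proof (cases "i < 5")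
      case True then show ?thesis using that e[of y] e[of x]
        by (metis (no_types, lifting) diff_zero length_upt nth_map nth_upt plus_nat.add_0)
    next
      case False then show ?thesis using m omega_zero[of y i] omega_zero[of x i] unfolding mless_ex_def by simp
    qed
  qed
  show ?thesis using m unfolding mless_def mless_ex_def deg_def
    using lexl_fun[of "omega y" 5 "omega x"] e eq lexl_list by metis
qed

definition hl :: "nat list list \<Rightarrow> nat list list \<Rightarrow> nat list list" where
  "hl L1 L2 = xorl (polyl 1 L1) (polyl 2 L2)"

lemma hl_set: "distinct L1 \<Longrightarrow> distinct L2 \<Longrightarrow> set (hl L1 L2) = sdiff (sq_poly 1 (set L1)) (sq_poly 2 (set L2))"
  unfolding hl_def by (simp add: polyl_set xorl_set)

definition check :: "nat list \<Rightarrow> nat list list \<Rightarrow> nat list list \<Rightarrow> bool" where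
  "check x L1 L2 = (let h = hl L1 L2 in x \<in> set h \<and> list_all (\<lambda>y. y = x \<or> mless_ex y x) h \<and>
     distinct L1 \<and> distinct L2 \<and> list_all (\<lambda>a. length a = 5) (L1 @ L2) \<and>
     0 < omega_ex x 2 \<and> list_all (\<lambda>v. v < 32) x)"

lemma sval_ge: "list_all (\<lambda>v. v < 32) x \<Longrightarrow> 0 < omega x 2 \<Longrightarrow> 3 \<le> sval x"
proof -
  assume a: "list_all (\<lambda>v. v < 32) x" and p: "0 < omega x 2"
  have "{i. omega x i > 0} \<subseteq> {..<5}" using omega_zero[OF a] by (metis mem_Collect_eq lessThan_iff less_irrefl not_le subsetI)
  then have "finite {i. omega x i > 0}" by (rule finite_subset) simp
  then have "2 \<le> Max {i. omega x i > 0}" using p by (simp add: Max_ge)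
  then show ?thesis unfolding sval_def by simp
qed

lemma check_sound: "check x L1 L2 \<Longrightarrow> strictly_inadmissible x"
proof -
  assume c: "check x L1 L2"
  define H where "H = set (hl L1 L2)"
  have d: "distinct L1" "distinct L2" and l: "\<forall>a\<in>set L1. length a = 5" "\<forall>a\<in>set L2. length a = 5"
    and xs: "list_all (\<lambda>v. v < 32) x" "0 < omega x 2"
    and xH: "x \<in> H" and ord: "\<forall>y\<in>H. y = x \<or> mless y x"
    using c mless_ex unfolding check_def Let_def H_def by (auto simp: list_all_iff omega_ex)
  have s3: "3 \<le> sval x" using sval_ge[OF xs] .
  have "(2::nat) < 2 ^ 3" by simp
  also have "(2::nat) ^ 3 \<le> 2 ^ sval x" using s3 by (rule power_increasing) simp
  finally have r2: "2 < (2::nat) ^ sval x" .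
  have p1: "is_poly 5 (set L1)" "is_poly 5 (set L2)" using l unfolding is_poly_def by auto
  have "sq_poly 1 (set L1) \<in> {sq_poly r f | r f. 0 < r \<and> r < 2 ^ sval x \<and> is_poly 5 f}"
    using p1 r2 by force
  moreover have "sq_poly 2 (set L2) \<in> {sq_poly r f | r f. 0 < r \<and> r < 2 ^ sval x \<and> is_poly 5 f}"
    using p1 r2 by force
  ultimately have "sdiff (sdiff {} (sq_poly 1 (set L1))) (sq_poly 2 (set L2)) \<in> hit5 (sval x)"
    unfolding hit5_def by (intro f2span.add) (auto intro: f2span.intros)
  then have Hh: "H \<in> hit5 (sval x)" unfolding H_def hl_set[OF d] by (simp add: sdiff_def)
  have m0: "{} \<in> P5minus (omega x)" unfolding P5minus_def is_poly_def by simp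
  have fin: "finite H" unfolding H_def by simp
  show ?thesis unfolding strictly_inadmissible_def
  proof (intro exI[of _ "H - {x}"] conjI bexI)
    show "finite (H - {x})" using fin by simp
    show "\<forall>y\<in>H - {x}. mless y x" using ord by auto
    show "sdiff {x} (H - {x}) = sdiff H {}" using xH unfolding sdiff_def by auto
  qed (use Hh m0 in auto)
qed

lemma case_0: "strictly_inadmissible (mmul (xpow 1 7) (f_mono 1 [1,6,6,1]))"
proof -
  have e: "mmul (xpow 1 7) (f_mono 1 [1,6,6,1]) = [7,1,6,6,1]" by code_simp
  have "check [7,1,6,6,1] [[7,1,3,5,4],[7,1,5,5,2],[7,1,5,6,1],[7,3,3,5,2],[7,3,3,6,1],[7,3,4,5,1]] [[7,2,3,5,2],[7,2,3,6,1]]" by code_simp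
  then show ?thesis unfolding e by (rule check_sound)
qed

lemma case_1: "strictly_inadmissible (mmul (xpow 2 7) (f_mono 2 [1,6,6,1]))"
proof -
  have e: "mmul (xpow 2 7) (f_mono 2 [1,6,6,1]) = [1,7,6,6,1]" by code_simp
  have "check [1,7,6,6,1] [[1,7,5,5,2],[1,7,5,6,1],[1,7,6,5,1]] [[1,7,5,5,1],[1,9,3,5,1]]" by code_simp
  then show ?thesis unfolding e by (rule check_sound)
qed

lemma case_2: "strictly_inadmissible (mmul (xpow 3 7) (f_mono 3 [1,6,6,1]))"
proof -
  have e: "mmul (xpow 3 7) (f_mono 3 [1,6,6,1]) = [1,6,7,6,1]" by code_simp
  have "check [1,6,7,6,1] [[1,5,7,5,2],[1,5,7,6,1],[1,6,7,5,1]] [[1,3,9,5,1],[1,5,7,5,1]]" by code_simp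
  then show ?thesis unfolding e by (rule check_sound)
qed

lemma case_3: "strictly_inadmissible (mmul (xpow 4 7) (f_mono 4 [1,6,6,1]))"
proof -
  have e: "mmul (xpow 4 7) (f_mono 4 [1,6,6,1]) = [1,6,6,7,1]" by code_simp
  have "check [1,6,6,7,1] [[1,5,5,7,2],[1,5,6,7,1],[1,6,5,7,1]] [[1,3,5,9,1],[1,5,5,7,1]]" by code_simp
  then show ?thesis unfolding e by (rule check_sound)
qed

lemma case_4: "strictly_inadmissible (mmul (xpow 5 7) (f_mono 5 [1,6,6,1]))"
proof -
  have e: "mmul (xpow 5 7) (f_mono 5 [1,6,6,1]) = [1,6,6,1,7]" by code_simp
  have "check [1,6,6,1,7] [[1,5,5,2,7],[1,5,6,1,7],[1,6,5,1,7]] [[1,3,5,1,9],[1,5,5,1,7]]" by code_simp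
  then show ?thesis unfolding e by (rule check_sound)
qed

lemma case_5: "strictly_inadmissible (mmul (xpow 1 7) (f_mono 1 [1,2,6,5]))"
proof -
  have e: "mmul (xpow 1 7) (f_mono 1 [1,2,6,5]) = [7,1,2,6,5]" by code_simp
  have "check [7,1,2,6,5] [[7,1,1,5,6],[7,1,2,5,5],[7,1,4,3,5],[7,3,1,3,6],[7,3,1,4,5],[7,3,2,3,5]] [[7,1,2,3,6],[7,2,1,3,6],[7,2,2,3,5]]" by code_simp
  then show ?thesis unfolding e by (rule check_sound)
qed

lemma case_6: "strictly_inadmissible (mmul (xpow 2 7) (f_mono 2 [1,2,6,5]))"
proof -
  have e: "mmul (xpow 2 7) (f_mono 2 [1,2,6,5]) = [1,7,2,6,5]" by code_simp
  have "check [1,7,2,6,5] [[1,7,1,5,6],[1,7,1,6,5],[1,7,2,5,5]] [[1,7,1,5,5],[1,9,1,3,5]]" by code_simp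
  then show ?thesis unfolding e by (rule check_sound)
qed

lemma case_7: "strictly_inadmissible (mmul (xpow 3 7) (f_mono 3 [1,2,6,5]))"
proof -
  have e: "mmul (xpow 3 7) (f_mono 3 [1,2,6,5]) = [1,2,7,6,5]" by code_simp
  have "check [1,2,7,6,5] [[1,1,7,5,6],[1,1,7,6,5],[1,2,7,5,5]] [[1,1,7,5,5],[1,1,9,3,5]]" by code_simp
  then show ?thesis unfolding e by (rule check_sound)
qed

lemma case_8: "strictly_inadmissible (mmul (xpow 4 7) (f_mono 4 [1,2,6,5]))"
proof -
  have e: "mmul (xpow 4 7) (f_mono 4 [1,2,6,5]) = [1,2,6,7,5]" by code_simp
  have "check [1,2,6,7,5] [[1,1,5,7,6],[1,1,6,7,5],[1,2,5,7,5]] [[1,1,3,9,5],[1,1,5,7,5]]" by code_simp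
  then show ?thesis unfolding e by (rule check_sound)
qed

lemma case_9: "strictly_inadmissible (mmul (xpow 5 7) (f_mono 5 [1,2,6,5]))"
proof -
  have e: "mmul (xpow 5 7) (f_mono 5 [1,2,6,5]) = [1,2,6,5,7]" by code_simp
  have "check [1,2,6,5,7] [[1,1,5,6,7],[1,1,6,5,7],[1,2,5,5,7]] [[1,1,3,5,9],[1,1,5,5,7]]" by code_simp
  then show ?thesis unfolding e by (rule check_sound)
qed

lemma case_10: "strictly_inadmissible (mmul (xpow 1 7) (f_mono 1 [1,6,2,5]))"
proof -
  have e: "mmul (xpow 1 7) (f_mono 1 [1,6,2,5]) = [7,1,6,2,5]" by code_simp
  have "check [7,1,6,2,5] [[7,1,3,4,5],[7,1,5,1,6],[7,1,5,2,5],[7,3,3,1,6],[7,3,3,2,5],[7,3,4,1,5]] [[7,2,3,1,6],[7,2,3,2,5]]" by code_simp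
  then show ?thesis unfolding e by (rule check_sound)
qed

lemma case_11: "strictly_inadmissible (mmul (xpow 2 7) (f_mono 2 [1,6,2,5]))"
proof -
  have e: "mmul (xpow 2 7) (f_mono 2 [1,6,2,5]) = [1,7,6,2,5]" by code_simp
  have "check [1,7,6,2,5] [[1,7,5,1,6],[1,7,5,2,5],[1,7,6,1,5]] [[1,7,5,1,5],[1,9,3,1,5]]" by code_simp
  then show ?thesis unfolding e by (rule check_sound)
qed

lemma case_12: "strictly_inadmissible (mmul (xpow 3 7) (f_mono 3 [1,6,2,5]))"
proof -
  have e: "mmul (xpow 3 7) (f_mono 3 [1,6,2,5]) = [1,6,7,2,5]" by code_simp
  have "check [1,6,7,2,5] [[1,5,7,1,6],[1,5,7,2,5],[1,6,7,1,5]] [[1,3,9,1,5],[1,5,7,1,5]]" by code_simp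
  then show ?thesis unfolding e by (rule check_sound)
qed

lemma case_13: "strictly_inadmissible (mmul (xpow 4 7) (f_mono 4 [1,6,2,5]))"
proof -
  have e: "mmul (xpow 4 7) (f_mono 4 [1,6,2,5]) = [1,6,2,7,5]" by code_simp
  have "check [1,6,2,7,5] [[1,5,1,7,6],[1,5,2,7,5],[1,6,1,7,5]] [[1,3,1,9,5],[1,5,1,7,5]]" by code_simp
  then show ?thesis unfolding e by (rule check_sound)
qed

lemma case_14: "strictly_inadmissible (mmul (xpow 5 7) (f_mono 5 [1,6,2,5]))"
proof -
  have e: "mmul (xpow 5 7) (f_mono 5 [1,6,2,5]) = [1,6,2,5,7]" by code_simp
  have "check [1,6,2,5,7] [[1,5,1,6,7],[1,5,2,5,7],[1,6,1,5,7]] [[1,3,1,5,9],[1,5,1,5,7]]" by code_simp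
  then show ?thesis unfolding e by (rule check_sound)
qed

lemma case_15: "strictly_inadmissible (mmul (xpow 1 7) (f_mono 1 [1,6,3,4]))"
proof -
  have e: "mmul (xpow 1 7) (f_mono 1 [1,6,3,4]) = [7,1,6,3,4]" by code_simp
  have "check [7,1,6,3,4] [[7,1,3,4,5],[7,1,3,5,4],[7,1,4,3,5],[7,1,4,5,3],[7,1,5,3,4],[7,1,5,4,3],[7,3,3,3,4],[7,3,3,4,3],[7,3,4,3,3]] [[7,1,6,2,3],[7,2,3,3,4],[7,2,3,4,3],[7,2,4,3,3]]" by code_simp
  then show ?thesis unfolding e by (rule check_sound)
qed

lemma case_16: "strictly_inadmissible (mmul (xpow 2 7) (f_mono 2 [1,6,3,4]))"
proof -
  have e: "mmul (xpow 2 7) (f_mono 2 [1,6,3,4]) = [1,7,6,3,4]" by code_simp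
  have "check [1,7,6,3,4] [[1,7,3,3,6],[1,7,3,4,5],[1,7,3,5,4],[1,7,3,6,3],[1,7,4,3,5],[1,7,4,5,3],[1,7,5,3,4],[1,7,5,4,3],[1,7,6,3,3],[1,10,3,3,3]] [[1,7,3,3,5],[1,7,3,5,3],[1,7,5,3,3],[1,7,6,2,3],[1,9,3,3,3]]" by code_simp
  then show ?thesis unfolding e by (rule check_sound)
qed

lemma case_17: "strictly_inadmissible (mmul (xpow 3 7) (f_mono 3 [1,6,3,4]))"
proof -
  have e: "mmul (xpow 3 7) (f_mono 3 [1,6,3,4]) = [1,6,7,3,4]" by code_simp
  have "check [1,6,7,3,4] [[1,3,7,3,6],[1,3,7,4,5],[1,3,7,5,4],[1,3,7,6,3],[1,3,10,3,3],[1,4,7,3,5],[1,4,7,5,3],[1,5,7,3,4],[1,5,7,4,3],[1,6,7,3,3]] [[1,3,7,3,5],[1,3,7,5,3],[1,3,9,3,3],[1,5,7,3,3],[1,6,7,2,3]]" by code_simp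
  then show ?thesis unfolding e by (rule check_sound)
qed

lemma case_18: "strictly_inadmissible (mmul (xpow 4 7) (f_mono 4 [1,6,3,4]))"
proof -
  have e: "mmul (xpow 4 7) (f_mono 4 [1,6,3,4]) = [1,6,3,7,4]" by code_simp
  have "check [1,6,3,7,4] [[1,3,3,7,6],[1,3,3,10,3],[1,3,4,7,5],[1,3,5,7,4],[1,3,6,7,3],[1,4,3,7,5],[1,4,5,7,3],[1,5,3,7,4],[1,5,4,7,3],[1,6,3,7,3]] [[1,3,3,7,5],[1,3,3,9,3],[1,3,5,7,3],[1,5,3,7,3],[1,6,2,7,3]]" by code_simp
  then show ?thesis unfolding e by (rule check_sound)
qed

lemma case_19: "strictly_inadmissible (mmul (xpow 5 7) (f_mono 5 [1,6,3,4]))"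
proof -
  have e: "mmul (xpow 5 7) (f_mono 5 [1,6,3,4]) = [1,6,3,4,7]" by code_simp
  have "check [1,6,3,4,7] [[1,3,3,3,10],[1,3,3,6,7],[1,3,4,5,7],[1,3,5,4,7],[1,3,6,3,7],[1,4,3,5,7],[1,4,5,3,7],[1,5,3,4,7],[1,5,4,3,7],[1,6,3,3,7]] [[1,3,3,3,9],[1,3,3,5,7],[1,3,5,3,7],[1,5,3,3,7],[1,6,2,3,7]]" by code_simp
  then show ?thesis unfolding e by (rule check_sound)
qed

lemma case_20: "strictly_inadmissible (mmul (xpow 1 7) (f_mono 1 [3,4,1,6]))"
proof -
  have e: "mmul (xpow 1 7) (f_mono 1 [3,4,1,6]) = [7,3,4,1,6]" by code_simp
  have "check [7,3,4,1,6] [[7,3,3,4,3],[7,3,4,1,5],[7,5,1,2,5],[7,5,1,4,3]] [[7,2,3,4,3],[7,3,1,2,6],[7,3,2,2,5],[7,3,2,4,3],[7,6,1,2,3]]" by code_simp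
  then show ?thesis unfolding e by (rule check_sound)
qed

lemma case_21: "strictly_inadmissible (mmul (xpow 2 7) (f_mono 2 [3,4,1,6]))"
proof -
  have e: "mmul (xpow 2 7) (f_mono 2 [3,4,1,6]) = [3,7,4,1,6]" by code_simp
  have "check [3,7,4,1,6] [[3,7,3,4,3],[3,7,4,1,5],[5,7,1,2,5],[5,7,1,4,3]] [[2,7,3,4,3],[3,7,1,2,6],[3,7,2,2,5],[3,7,2,4,3],[6,7,1,2,3]]" by code_simp
  then show ?thesis unfolding e by (rule check_sound)
qed

lemma case_22: "strictly_inadmissible (mmul (xpow 3 7) (f_mono 3 [3,4,1,6]))"
proof -
  have e: "mmul (xpow 3 7) (f_mono 3 [3,4,1,6]) = [3,4,7,1,6]" by code_simp
  have "check [3,4,7,1,6] [[3,3,7,4,3],[3,4,7,1,5],[5,1,7,2,5],[5,1,7,4,3]] [[2,3,7,4,3],[3,1,7,2,6],[3,2,7,2,5],[3,2,7,4,3],[6,1,7,2,3]]" by code_simp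
  then show ?thesis unfolding e by (rule check_sound)
qed

lemma case_23: "strictly_inadmissible (mmul (xpow 4 7) (f_mono 4 [3,4,1,6]))"
proof -
  have e: "mmul (xpow 4 7) (f_mono 4 [3,4,1,6]) = [3,4,1,7,6]" by code_simp
  have "check [3,4,1,7,6] [[3,3,4,7,3],[3,4,1,7,5],[5,1,2,7,5],[5,1,4,7,3]] [[2,3,4,7,3],[3,1,2,7,6],[3,2,2,7,5],[3,2,4,7,3],[6,1,2,7,3]]" by code_simp
  then show ?thesis unfolding e by (rule check_sound)
qed

lemma case_24: "strictly_inadmissible (mmul (xpow 5 7) (f_mono 5 [3,4,1,6]))"
proof -
  have e: "mmul (xpow 5 7) (f_mono 5 [3,4,1,6]) = [3,4,1,6,7]" by code_simp
  have "check [3,4,1,6,7] [[3,3,4,3,7],[3,4,1,5,7],[5,1,2,5,7],[5,1,4,3,7]] [[2,3,4,3,7],[3,1,2,6,7],[3,2,2,5,7],[3,2,4,3,7],[6,1,2,3,7]]" by code_simp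
  then show ?thesis unfolding e by (rule check_sound)
qed

lemma case_25: "strictly_inadmissible (mmul (xpow 1 7) (f_mono 1 [3,4,5,2]))"
proof -
  have e: "mmul (xpow 1 7) (f_mono 1 [3,4,5,2]) = [7,3,4,5,2]" by code_simp
  have "check [7,3,4,5,2] [[7,5,1,3,4],[7,5,1,5,2]] [[7,3,1,6,2],[7,3,2,3,4],[7,3,2,5,2],[7,6,1,3,2]]" by code_simp
  then show ?thesis unfolding e by (rule check_sound)
qed

lemma case_26: "strictly_inadmissible (mmul (xpow 2 7) (f_mono 2 [3,4,5,2]))"
proof -
  have e: "mmul (xpow 2 7) (f_mono 2 [3,4,5,2]) = [3,7,4,5,2]" by code_simp
  have "check [3,7,4,5,2] [[5,7,1,3,4],[5,7,1,5,2]] [[3,7,1,6,2],[3,7,2,3,4],[3,7,2,5,2],[6,7,1,3,2]]" by code_simp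
  then show ?thesis unfolding e by (rule check_sound)
qed

lemma case_27: "strictly_inadmissible (mmul (xpow 3 7) (f_mono 3 [3,4,5,2]))"
proof -
  have e: "mmul (xpow 3 7) (f_mono 3 [3,4,5,2]) = [3,4,7,5,2]" by code_simp
  have "check [3,4,7,5,2] [[5,1,7,3,4],[5,1,7,5,2]] [[3,1,7,6,2],[3,2,7,3,4],[3,2,7,5,2],[6,1,7,3,2]]" by code_simp
  then show ?thesis unfolding e by (rule check_sound)
qed

lemma case_28: "strictly_inadmissible (mmul (xpow 4 7) (f_mono 4 [3,4,5,2]))"
proof -
  have e: "mmul (xpow 4 7) (f_mono 4 [3,4,5,2]) = [3,4,5,7,2]" by code_simp
  have "check [3,4,5,7,2] [[5,1,3,7,4],[5,1,5,7,2]] [[3,1,6,7,2],[3,2,3,7,4],[3,2,5,7,2],[6,1,3,7,2]]" by code_simp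
  then show ?thesis unfolding e by (rule check_sound)
qed

lemma case_29: "strictly_inadmissible (mmul (xpow 5 7) (f_mono 5 [3,4,5,2]))"
proof -
  have e: "mmul (xpow 5 7) (f_mono 5 [3,4,5,2]) = [3,4,5,2,7]" by code_simp
  have "check [3,4,5,2,7] [[5,1,3,4,7],[5,1,5,2,7]] [[3,1,6,2,7],[3,2,3,4,7],[3,2,5,2,7],[6,1,3,2,7]]" by code_simp
  then show ?thesis unfolding e by (rule check_sound)
qed

lemma case_30: "strictly_inadmissible (mmul (xpow 1 7) (f_mono 1 [3,5,4,2]))"
proof -
  have e: "mmul (xpow 1 7) (f_mono 1 [3,5,4,2]) = [7,3,5,4,2]" by code_simp
  have "check [7,3,5,4,2] [[7,3,5,1,4],[7,5,3,1,4],[7,5,5,1,2]] [[7,3,3,2,4],[7,3,5,2,2],[7,3,6,1,2],[7,6,3,1,2]]" by code_simp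
  then show ?thesis unfolding e by (rule check_sound)
qed

lemma case_31: "strictly_inadmissible (mmul (xpow 2 7) (f_mono 2 [3,5,4,2]))"
proof -
  have e: "mmul (xpow 2 7) (f_mono 2 [3,5,4,2]) = [3,7,5,4,2]" by code_simp
  have "check [3,7,5,4,2] [[3,7,5,1,4],[5,7,3,1,4],[5,7,5,1,2]] [[3,7,3,2,4],[3,7,5,2,2],[3,7,6,1,2],[6,7,3,1,2]]" by code_simp
  then show ?thesis unfolding e by (rule check_sound)
qed

lemma case_32: "strictly_inadmissible (mmul (xpow 3 7) (f_mono 3 [3,5,4,2]))"
proof -
  have e: "mmul (xpow 3 7) (f_mono 3 [3,5,4,2]) = [3,5,7,4,2]" by code_simp
  have "check [3,5,7,4,2] [[3,5,7,1,4],[5,3,7,1,4],[5,5,7,1,2]] [[3,3,7,2,4],[3,5,7,2,2],[3,6,7,1,2],[6,3,7,1,2]]" by code_simp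
  then show ?thesis unfolding e by (rule check_sound)
qed

lemma case_33: "strictly_inadmissible (mmul (xpow 4 7) (f_mono 4 [3,5,4,2]))"
proof -
  have e: "mmul (xpow 4 7) (f_mono 4 [3,5,4,2]) = [3,5,4,7,2]" by code_simp
  have "check [3,5,4,7,2] [[3,5,1,7,4],[5,3,1,7,4],[5,5,1,7,2]] [[3,3,2,7,4],[3,5,2,7,2],[3,6,1,7,2],[6,3,1,7,2]]" by code_simp
  then show ?thesis unfolding e by (rule check_sound)
qed

lemma case_34: "strictly_inadmissible (mmul (xpow 5 7) (f_mono 5 [3,5,4,2]))"
proof -
  have e: "mmul (xpow 5 7) (f_mono 5 [3,5,4,2]) = [3,5,4,2,7]" by code_simp
  have "check [3,5,4,2,7] [[3,5,1,4,7],[5,3,1,4,7],[5,5,1,2,7]] [[3,3,2,4,7],[3,5,2,2,7],[3,6,1,2,7],[6,3,1,2,7]]" by code_simp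
  then show ?thesis unfolding e by (rule check_sound)
qed

lemma case_35: "strictly_inadmissible (mmul (xpow 1 7) (f_mono 1 [3,4,3,4]))"
proof -
  have e: "mmul (xpow 1 7) (f_mono 1 [3,4,3,4]) = [7,3,4,3,4]" by code_simp
  have "check [7,3,4,3,4] [[7,3,3,3,4]] [[7,2,3,3,4]]" by code_simp
  then show ?thesis unfolding e by (rule check_sound)
qed

lemma case_36: "strictly_inadmissible (mmul (xpow 2 7) (f_mono 2 [3,4,3,4]))"
proof -
  have e: "mmul (xpow 2 7) (f_mono 2 [3,4,3,4]) = [3,7,4,3,4]" by code_simp
  have "check [3,7,4,3,4] [[3,7,3,3,4]] [[2,7,3,3,4]]" by code_simp
  then show ?thesis unfolding e by (rule check_sound)
qed

lemma case_37: "strictly_inadmissible (mmul (xpow 3 7) (f_mono 3 [3,4,3,4]))"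
proof -
  have e: "mmul (xpow 3 7) (f_mono 3 [3,4,3,4]) = [3,4,7,3,4]" by code_simp
  have "check [3,4,7,3,4] [[3,3,7,3,4]] [[2,3,7,3,4]]" by code_simp
  then show ?thesis unfolding e by (rule check_sound)
qed

lemma case_38: "strictly_inadmissible (mmul (xpow 4 7) (f_mono 4 [3,4,3,4]))"
proof -
  have e: "mmul (xpow 4 7) (f_mono 4 [3,4,3,4]) = [3,4,3,7,4]" by code_simp
  have "check [3,4,3,7,4] [[3,3,3,7,4]] [[2,3,3,7,4]]" by code_simp
  then show ?thesis unfolding e by (rule check_sound)
qed

lemma case_39: "strictly_inadmissible (mmul (xpow 5 7) (f_mono 5 [3,4,3,4]))"
proof -
  have e: "mmul (xpow 5 7) (f_mono 5 [3,4,3,4]) = [3,4,3,4,7]" by code_simp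
  have "check [3,4,3,4,7] [[3,3,3,4,7]] [[2,3,3,4,7]]" by code_simp
  then show ?thesis unfolding e by (rule check_sound)
qed

lemma case_40: "strictly_inadmissible (mmul (xpow 1 7) (f_mono 1 [3,4,4,3]))"
proof -
  have e: "mmul (xpow 1 7) (f_mono 1 [3,4,4,3]) = [7,3,4,4,3]" by code_simp
  have "check [7,3,4,4,3] [[7,3,3,4,3]] [[7,2,3,4,3]]" by code_simp
  then show ?thesis unfolding e by (rule check_sound)
qed

lemma case_41: "strictly_inadmissible (mmul (xpow 2 7) (f_mono 2 [3,4,4,3]))"
proof -
  have e: "mmul (xpow 2 7) (f_mono 2 [3,4,4,3]) = [3,7,4,4,3]" by code_simp
  have "check [3,7,4,4,3] [[3,7,3,4,3]] [[2,7,3,4,3]]" by code_simp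
  then show ?thesis unfolding e by (rule check_sound)
qed

lemma case_42: "strictly_inadmissible (mmul (xpow 3 7) (f_mono 3 [3,4,4,3]))"
proof -
  have e: "mmul (xpow 3 7) (f_mono 3 [3,4,4,3]) = [3,4,7,4,3]" by code_simp
  have "check [3,4,7,4,3] [[3,3,7,4,3]] [[2,3,7,4,3]]" by code_simp
  then show ?thesis unfolding e by (rule check_sound)
qed

lemma case_43: "strictly_inadmissible (mmul (xpow 4 7) (f_mono 4 [3,4,4,3]))"
proof -
  have e: "mmul (xpow 4 7) (f_mono 4 [3,4,4,3]) = [3,4,4,7,3]" by code_simp
  have "check [3,4,4,7,3] [[3,3,4,7,3]] [[2,3,4,7,3]]" by code_simp
  then show ?thesis unfolding e by (rule check_sound)
qed

lemma case_44: "strictly_inadmissible (mmul (xpow 5 7) (f_mono 5 [3,4,4,3]))"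
proof -
  have e: "mmul (xpow 5 7) (f_mono 5 [3,4,4,3]) = [3,4,4,3,7]" by code_simp
  have "check [3,4,4,3,7] [[3,3,4,3,7]] [[2,3,4,3,7]]" by code_simp
  then show ?thesis unfolding e by (rule check_sound)
qed

theorem lemma4:
  fixes w :: "nat list" and i :: nat
  assumes "w \<in> {[1,6,6,1], [1,2,6,5], [1,6,2,5], [1,6,3,4], [3,4,1,6],
                 [3,4,5,2], [3,5,4,2], [3,4,3,4], [3,4,4,3]}"
    and "1 \<le> i" and "i \<le> 5"
  shows "strictly_inadmissible (mmul (xpow i 7) (f_mono i w))"
proof -
  have "i = 1 \<or> i = 2 \<or> i = 3 \<or> i = 4 \<or> i = 5" using assms(2,3) by auto
  then show ?thesis using assms(1)
    by (elim disjE insertE emptyE; simp only: case_0 case_1 case_2 case_3 case_4 case_5 case_6 case_7 case_8 case_9 case_10 case_11 case_12 case_13 case_14 case_15 case_16 case_17 case_18 case_19 case_20 case_21 case_22 case_23 case_24 case_25 case_26 case_27 case_28 case_29 case_30 case_31 case_32 case_33 case_34 case_35 case_36 case_37 case_38 case_39 case_40 case_41 case_42 case_43 case_44)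
qed

end
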